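(* Suppose Assumptions 1 and 3 hold and $\boldsymbol{x}\notin\mathcal{Z}$. Then $H(\rho)$ is nonincreasing on $(0,\infty)$. Furthermore, the Lagrange multiplier $\rho^*$ of the KKT system of the projection of $\boldsymbol{x}$ onto $\mathcal{Z}$ satisfies $\rho^*>0$, and $h<0$ for every $h\in\mathcal{K}_H(\rho^* )$.
   Context: Assumption 1: $l:\mathbb{R}\to\mathbb{R}$ is nondecreasing and convex, and $\inf_x l(x)<\lambda$. Assumption 3: $l$ is differentiable and nonconstant, and $l'$ is semismooth with respect to its Clarke subdifferential $\partial l'$. $\mathcal{Z}=\{\boldsymbol{z}\in\mathbb{R}^m:\frac1m\sum_i l(z_i)\le\lambda\}$. The projection problem is $\min_{\boldsymbol{u}}\frac12\|\boldsymbol{u}-\boldsymbol{x}\|^2$ s.t. $\boldsymbol{u}\in\mathcal{Z}$, with KKT system $u_i-x_i+\frac{\rho}{m}l'(u_i)=0$ for all $i$, $\rho(\frac1m\sum_i l(u_i)-\lambda)=0$, $\rho\ge0$, $\frac1m\sum_il(u_i)\le\lambda$. $L(\boldsymbol{u})=\sum_i l(u_i)$, $\nabla L(\boldsymbol{u})=(l'(u_i))_i$, $\partial\nabla L(\boldsymbol{u})=\{\mathrm{diag}(\eta_1,\dots,\eta_m):\eta_i\in\partial l'(u_i)\}$. For $\rho>0$, $\boldsymbol{u}(\rho)$ is the unique solution of $\boldsymbol{u}-\boldsymbol{x}+\frac{\rho}{m}\nabla L(\boldsymbol{u})=\boldsymbol{0}$, $H(\rho)=L(\boldsymbol{u}(\rho))-m\lambda$,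 and $\mathcal{K}_H(\rho)=\{-\nabla L(\boldsymbol{u})^\top(m\mathbf{I}_m+\rho\Lambda)^{-1}\nabla L(\boldsymbol{u}):\Lambda\in\partial\nabla L(\boldsymbol{u})\}$ with $\boldsymbol{u}=\boldsymbol{u}(\rho)$. *)

theory Defs
  imports "HOL-Analysis.Analysis"
begin

definition clarke_subdiff :: "(real \<Rightarrow> real) \<Rightarrow> real \<Rightarrow> real set" where
  "clarke_subdiff f x = convex hull {v. \<exists>xs::nat \<Rightarrow> real. xs \<longlonglongrightarrow> x \<and>
       (\<forall>k. f differentiable (at (xs k))) \<and> (\<lambda>k. deriv f (xs k)) \<longlonglongrightarrow> v}"

definition semismooth_at :: "(real \<Rightarrow> real) \<Rightarrow> real \<Rightarrow> bool" where
  "semismooth_at f x \<longleftrightarrow>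
     (\<exists>\<delta>>0. \<exists>K. \<forall>y\<in>ball x \<delta>. \<forall>z\<in>ball x \<delta>. \<bar>f y - f z\<bar> \<le> K * \<bar>y - z\<bar>) \<and>
     (\<forall>d::real. \<exists>D. ((\<lambda>t. (f (x + t * d) - f x) / t) \<longlongrightarrow> D) (at_right 0)) \<and>
     (\<forall>\<epsilon>>0. \<exists>\<delta>>0. \<forall>h. h \<noteq> 0 \<and> \<bar>h\<bar> < \<delta> \<longrightarrow>
        (\<forall>V\<in>clarke_subdiff f (x + h). \<bar>f (x + h) - f x - V * h\<bar> \<le> \<epsilon> * \<bar>h\<bar>))"

definition semismooth :: "(real \<Rightarrow> real) \<Rightarrow> bool" where
  "semismooth f \<longleftrightarrow> (\<forall>x. semismooth_at f x)"

text \<open>m = CARD('m) is the dimension.\<close>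

definition Lsum :: "(real \<Rightarrow> real) \<Rightarrow> real^'m \<Rightarrow> real" where
  "Lsum l u = (\<Sum>i\<in>UNIV. l (u $ i))"

definition gradL :: "(real \<Rightarrow> real) \<Rightarrow> real^'m \<Rightarrow> real^'m" where
  "gradL l u = (\<chi> i. deriv l (u $ i))"

definition Zset :: "(real \<Rightarrow> real) \<Rightarrow> real \<Rightarrow> (real^'m) set" where
  "Zset l lam = {z. (1 / real CARD('m)) * Lsum l z \<le> lam}"

definition KKT :: "(real \<Rightarrow> real) \<Rightarrow> real \<Rightarrow> real^'m \<Rightarrow> real^'m \<Rightarrow> real \<Rightarrow> bool" where
  "KKT l lam x u \<rho> \<longleftrightarrow>
     (\<forall>i. u $ i - x $ i + (\<rho> / real CARD('m)) * deriv l (u $ i) = 0) \<and>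
     \<rho> * ((1 / real CARD('m)) * Lsum l u - lam) = 0 \<and>
     \<rho> \<ge> 0 \<and>
     (1 / real CARD('m)) * Lsum l u \<le> lam"

definition u_of :: "(real \<Rightarrow> real) \<Rightarrow> real^'m \<Rightarrow> real \<Rightarrow> real^'m" where
  "u_of l x \<rho> = (THE u. u - x + (\<rho> / real CARD('m)) *\<^sub>R gradL l u = 0)"

definition Hfun :: "(real \<Rightarrow> real) \<Rightarrow> real \<Rightarrow> real^'m \<Rightarrow> real \<Rightarrow> real" where
  "Hfun l lam x \<rho> = Lsum l (u_of l x \<rho>) - real CARD('m) * lam"

definition clarke_jac_gradL :: "(real \<Rightarrow> real) \<Rightarrow> real^'m \<Rightarrow> (real^'m^'m) set" where
  "clarke_jac_gradL l u = {\<Lambda>. \<exists>\<eta>. (\<forall>i. \<eta> i \<in> clarke_subdiff (deriv l) (u $ i)) \<and>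
       \<Lambda> = (\<chi> i j. if i = j then \<eta> i else 0)}"

definition K_H :: "(real \<Rightarrow> real) \<Rightarrow> real^'m \<Rightarrow> real \<Rightarrow> real set" where
  "K_H l x \<rho> = (let u = u_of l x \<rho> in
     {- (gradL l u \<bullet> (matrix_inv (real CARD('m) *\<^sub>R mat 1 + \<rho> *\<^sub>R \<Lambda>) *v gradL l u)) | \<Lambda>.
        \<Lambda> \<in> clarke_jac_gradL l u})"

end

theory Submission imports Defs begin

lemma deriv_facts:
  fixes l :: "real \<Rightarrow> real"
  assumes mono: "mono l" and cvx: "convex_on UNIV l"
    and diff: "\<And>t. l differentiable (at t)"
  shows "\<And>y c. l y - l c \<ge> deriv l c * (y - c)"
    and "\<And>a b. a \<le> b \<Longrightarrow> deriv l a \<le> deriv l b"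
    and "\<And>t. deriv l t \<ge> 0"
proof -
  have D: "\<And>t. (l has_real_derivative deriv l t) (at t)"
    using diff DERIV_deriv_iff_real_differentiable by blast
  show T: "\<And>y c. l y - l c \<ge> deriv l c * (y - c)"
    by (rule convex_on_imp_above_tangent[OF cvx]) (auto simp: D)
  show "\<And>a b. a \<le> b \<Longrightarrow> deriv l a \<le> deriv l b"
  proof -
    fix a b :: real assume "a \<le> b"
    have "l b - l a \<ge> deriv l a * (b - a)" "l a - l b \<ge> deriv l b * (a - b)" using T by auto
    hence "(deriv l b - deriv l a) * (b - a) \<ge> 0" by (simp add: algebra_simps)
    show "deriv l a \<le> deriv l b"
    proof (cases "a = b")
      case True thus ?thesis by simp
    next
      case False
      hence ba: "b - a > 0" using \<open>a \<le> b\<close> by simp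
      have "0 \<le> deriv l b - deriv l a"
        using \<open>(deriv l b - deriv l a) * (b - a) \<ge> 0\<close> ba by (simp add: zero_le_mult_iff)
      thus ?thesis by simp
    qed
  qed
  show "\<And>t. deriv l t \<ge> 0"
    using mono_on_imp_deriv_nonneg[where A=UNIV and f=l, OF mono_imp_mono_on[OF mono] D] by simp
qed

lemma lip_cont:
  fixes f :: "real \<Rightarrow> real"
  assumes "semismooth_at f x"
  shows "isCont f x"
proof -
  obtain \<delta> K where d: "\<delta> > 0" and L: "\<forall>y\<in>ball x \<delta>. \<forall>z\<in>ball x \<delta>. \<bar>f y - f z\<bar> \<le> K * \<bar>y - z\<bar>"
    using assms unfolding semismooth_at_def by blast
  define K' where "K' = \<bar>K\<bar> + 1"
  have K': "K' > 0" by (simp add: K'_def)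
  have L': "\<And>y. dist y x < \<delta> \<Longrightarrow> \<bar>f y - f x\<bar> \<le> K' * \<bar>y - x\<bar>"
  proof -
    fix y assume "dist y x < \<delta>"
    hence "\<bar>f y - f x\<bar> \<le> K * \<bar>y - x\<bar>" using L d by (auto simp: dist_commute)
    also have "\<dots> \<le> K' * \<bar>y - x\<bar>" unfolding K'_def by (intro mult_right_mono) auto
    finally show "\<bar>f y - f x\<bar> \<le> K' * \<bar>y - x\<bar>" .
  qed
  show ?thesis
    unfolding continuous_at_eps_delta
  proof (intro allI impI)
    fix e :: real assume e: "e > 0"
    show "\<exists>d>0. \<forall>x'. dist x' x < d \<longrightarrow> dist (f x') (f x) < e"
    proof (intro exI[of _ "min \<delta> (e / K')"] conjI allI impI)
      show "min \<delta> (e / K') > 0" using d e K' by simp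
      fix y assume y: "dist y x < min \<delta> (e / K')"
      hence "\<bar>f y - f x\<bar> \<le> K' * \<bar>y - x\<bar>" using L' by simp
      also have "\<dots> < K' * (e / K')"
      proof -
        have "\<bar>y - x\<bar> < e / K'" using y by (simp add: dist_real_def)
        thus ?thesis using K' by (rule mult_strict_left_mono)
      qed
      also have "\<dots> = e" using K' by simp
      finally show "dist (f y) (f x) < e" by (simp add: dist_real_def)
    qed
  qed
qed

lemma solve_exists:
  fixes l :: "real \<Rightarrow> real"
  assumes dm: "\<And>a b. a \<le> b \<Longrightarrow> deriv l a \<le> deriv l b"
    and dn: "\<And>t. deriv l t \<ge> 0"
    and cont: "\<And>t. isCont (deriv l) t"
    and c: "c \<ge> 0"
  shows "\<exists>t. t + c * deriv l t = a"
proof -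
  let ?g = "\<lambda>t. t + c * deriv l t"
  let ?lo = "a - c * deriv l a"
  have lo: "?lo \<le> a" using c dn by simp
  have "?g ?lo \<le> a"
  proof -
    have "deriv l ?lo \<le> deriv l a" using dm lo by simp
    hence "c * deriv l ?lo \<le> c * deriv l a" using c by (rule mult_left_mono)
    thus ?thesis by simp
  qed
  moreover have "a \<le> ?g a" using c dn by simp
  moreover have "\<forall>t. ?lo \<le> t \<and> t \<le> a \<longrightarrow> isCont ?g t"
    by (intro allI impI isCont_add isCont_mult continuous_ident continuous_const cont)
  ultimately obtain t where "?g t = a" using IVT[of ?g ?lo a a] lo by auto
  thus ?thesis by blast
qed

lemma solve_unique:
  fixes l :: "real \<Rightarrow> real"
  assumes dm: "\<And>a b. a \<le> b \<Longrightarrow> deriv l a \<le> deriv l b"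
    and c: "c \<ge> 0"
    and "s + c * deriv l s = t + c * deriv l t"
  shows "s = t"
proof (rule ccontr)
  assume "s \<noteq> t"
  moreover have "s < t \<Longrightarrow> False"
  proof -
    assume st: "s < t"
    have "c * deriv l s \<le> c * deriv l t" using dm[of s t] st c by (simp add: mult_left_mono)
    thus False using st assms(3) by simp
  qed
  moreover have "t < s \<Longrightarrow> False"
  proof -
    assume st: "t < s"
    have "c * deriv l t \<le> c * deriv l s" using dm[of t s] st c by (simp add: mult_left_mono)
    thus False using st assms(3) by simp
  qed
  ultimately show False by linarith
qed

lemma vec_eq_char:
  fixes l :: "real \<Rightarrow> real" and u x :: "real^'m"
  shows "(u - x + c *\<^sub>R gradL l u = 0) \<longleftrightarrow> (\<forall>i. u $ i + c * deriv l (u $ i) = x $ i)"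
  by (auto simp: vec_eq_iff gradL_def algebra_simps)

lemma u_of_char:
  fixes l :: "real \<Rightarrow> real" and x :: "real^'m"
  assumes dm: "\<And>a b. a \<le> b \<Longrightarrow> deriv l a \<le> deriv l b"
    and dn: "\<And>t. deriv l t \<ge> 0"
    and cont: "\<And>t. isCont (deriv l) t"
    and r: "\<rho> \<ge> 0"
  shows "\<forall>i. u_of l x \<rho> $ i + (\<rho> / real CARD('m)) * deriv l (u_of l x \<rho> $ i) = x $ i"
    and "\<And>v. (\<forall>i. v $ i + (\<rho> / real CARD('m)) * deriv l (v $ i) = x $ i) \<Longrightarrow> u_of l x \<rho> = v"
proof -
  let ?c = "\<rho> / real CARD('m)"
  have c: "?c \<ge> 0" using r by simp
  have uniq: "\<And>v w. (\<forall>i. v $ i + ?c * deriv l (v $ i) = x $ i) \<Longrightarrow>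
      (\<forall>i. w $ i + ?c * deriv l (w $ i) = x $ i) \<Longrightarrow> v = w"
  proof -
    fix v w :: "real^'m"
    assume hv: "\<forall>i. v $ i + ?c * deriv l (v $ i) = x $ i"
      and hw: "\<forall>i. w $ i + ?c * deriv l (w $ i) = x $ i"
    show "v = w" unfolding vec_eq_iff
    proof
      fix i
      have "v $ i + ?c * deriv l (v $ i) = w $ i + ?c * deriv l (w $ i)"
        using hv hw by simp
      thus "v $ i = w $ i" using solve_unique[OF dm c] by blast
    qed
  qed
  define v :: "real^'m" where "v = (\<chi> i. SOME t. t + ?c * deriv l t = x $ i)"
  have v: "\<forall>i. v $ i + ?c * deriv l (v $ i) = x $ i"
    unfolding v_def using solve_exists[OF dm dn cont c] by (auto intro: someI_ex)
  have ex1: "\<exists>!u. u - x + ?c *\<^sub>R gradL l u = 0"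
    unfolding vec_eq_char using v uniq by blast
  have "u_of l x \<rho> - x + ?c *\<^sub>R gradL l (u_of l x \<rho>) = 0"
    unfolding u_of_def by (rule theI'[OF ex1])
  thus "\<forall>i. u_of l x \<rho> $ i + ?c * deriv l (u_of l x \<rho> $ i) = x $ i"
    unfolding vec_eq_char .
  thus "\<And>w. (\<forall>i. w $ i + ?c * deriv l (w $ i) = x $ i) \<Longrightarrow> u_of l x \<rho> = w"
    using uniq by blast
qed



definition dg :: "('n \<Rightarrow> real) \<Rightarrow> real^'n^'n" where
  "dg d = (\<chi> i j. if i = j then d i else 0)"

lemma ite_mult: "(if P then a else 0) * (b::real) = (if P then a*b else 0)"
  "(b::real) * (if P then a else 0) = (if P then b*a else 0)" by simp_all

lemma dg_mult: "dg a ** dg b = dg (\<lambda>i. a i * b i)"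
  unfolding dg_def matrix_matrix_mult_def
  by (simp add: vec_eq_iff ite_mult sum.delta sum.delta')

lemma dg_one: "dg (\<lambda>_. 1) = mat 1"
  unfolding dg_def mat_def by (simp add: vec_eq_iff)

lemma dg_inv:
  assumes "\<And>i. d i \<noteq> 0"
  shows "matrix_inv (dg d) = dg (\<lambda>i. 1 / d i)"
proof -
  let ?D = "dg (\<lambda>i. 1 / d i)"
  have h1: "dg d ** ?D = mat 1" "?D ** dg d = mat 1"
    using assms by (simp_all add: dg_mult dg_one[symmetric])
  let ?B = "matrix_inv (dg d)"
  have "dg d ** ?B = mat 1 \<and> ?B ** dg d = mat 1"
    unfolding matrix_inv_def by (rule someI[of _ ?D]) (use h1 in auto)
  hence "?B = ?B ** (dg d ** ?D)" using h1 by (simp add: matrix_mul_rid)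
  also have "\<dots> = (?B ** dg d) ** ?D" by (simp add: matrix_mul_assoc)
  also have "\<dots> = ?D" using \<open>dg d ** ?B = mat 1 \<and> ?B ** dg d = mat 1\<close> by (simp add: matrix_mul_lid)
  finally show ?thesis .
qed

lemma dg_mulv: "dg d *v v = (\<chi> i. d i * v $ i)"
  unfolding dg_def matrix_vector_mult_def
  by (simp add: vec_eq_iff ite_mult sum.delta sum.delta')

lemma clarke_nonneg:
  fixes f :: "real \<Rightarrow> real"
  assumes "mono f"
  shows "v \<in> clarke_subdiff f t \<Longrightarrow> v \<ge> 0"
proof -
  have "{v. \<exists>xs::nat \<Rightarrow> real. xs \<longlonglongrightarrow> t \<and>
       (\<forall>k. f differentiable (at (xs k))) \<and> (\<lambda>k. deriv f (xs k)) \<longlonglongrightarrow> v} \<subseteq> {0..}"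
  proof
    fix v assume "v \<in> {v. \<exists>xs::nat \<Rightarrow> real. xs \<longlonglongrightarrow> t \<and>
       (\<forall>k. f differentiable (at (xs k))) \<and> (\<lambda>k. deriv f (xs k)) \<longlonglongrightarrow> v}"
    then obtain xs :: "nat \<Rightarrow> real" where d: "\<forall>k. f differentiable (at (xs k))"
      and lim: "(\<lambda>k. deriv f (xs k)) \<longlonglongrightarrow> v" by blast
    have "\<And>k. deriv f (xs k) \<ge> 0"
    proof -
      fix k
      have "(f has_real_derivative deriv f (xs k)) (at (xs k))"
        using d DERIV_deriv_iff_real_differentiable by blast
      thus "deriv f (xs k) \<ge> 0"
        using mono_on_imp_deriv_nonneg[of UNIV f] assms by simp
    qed
    hence "0 \<le> v" using LIMSEQ_le_const[OF lim] by blast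
    thus "v \<in> {0..}" by simp
  qed
  hence "clarke_subdiff f t \<subseteq> {0..}"
    unfolding clarke_subdiff_def by (intro hull_minimal) (auto simp: convex_real_interval)
  thus "v \<in> clarke_subdiff f t \<Longrightarrow> v \<ge> 0" by auto
qed


theorem mainTheorem10:
  fixes l :: "real \<Rightarrow> real" and lam :: real and x :: "real^'m"
  assumes mono: "mono l" and cvx: "convex_on UNIV l"
    and below: "\<exists>t. l t < lam"
    and diff: "\<And>t. l differentiable (at t)"
    and nonconst: "\<exists>a b. l a \<noteq> l b"
    and ssm: "semismooth (deriv l)"
    and notin: "x \<notin> Zset l lam"
  shows "(\<forall>\<rho>1 \<rho>2. 0 < \<rho>1 \<and> \<rho>1 \<le> \<rho>2 \<longrightarrow> Hfun l lam x \<rho>2 \<le> Hfun l lam x \<rho>1) \<and>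
         (\<forall>u \<rho>. KKT l lam x u \<rho> \<longrightarrow> \<rho> > 0 \<and> (\<forall>h\<in>K_H l x \<rho>. h < 0))"
proof -
  note T = deriv_facts(1)[OF mono cvx diff]
  note dm = deriv_facts(2)[OF mono cvx diff]
  note dn = deriv_facts(3)[OF mono cvx diff]
  have cont: "\<And>t. isCont (deriv l) t"
    using ssm lip_cont unfolding semismooth_def by blast
  have m: "real CARD('m) > 0" by simp
  show ?thesis
  proof (intro conjI allI impI)
    fix \<rho>1 \<rho>2 :: real assume r: "0 < \<rho>1 \<and> \<rho>1 \<le> \<rho>2"
    define u1 where "u1 = u_of l x \<rho>1"
    define u2 where "u2 = u_of l x \<rho>2"
    define c1 where "c1 = \<rho>1 / real CARD('m)"
    define c2 where "c2 = \<rho>2 / real CARD('m)"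
    have c12: "0 \<le> c1" "c1 \<le> c2" using r m unfolding c1_def c2_def
      by (simp_all add: divide_right_mono)
    have e1: "\<forall>i. u1 $ i + c1 * deriv l (u1 $ i) = x $ i"
      unfolding u1_def c1_def by (rule u_of_char(1)[OF dm dn cont]) (use r in auto)
    have e2: "\<forall>i. u2 $ i + c2 * deriv l (u2 $ i) = x $ i"
      unfolding u2_def c2_def by (rule u_of_char(1)[OF dm dn cont]) (use r in auto)
    have le: "u2 $ i \<le> u1 $ i" for i
    proof (rule ccontr)
      assume "\<not> u2 $ i \<le> u1 $ i"
      hence lt: "u1 $ i < u2 $ i" by simp
      have "c1 * deriv l (u1 $ i) \<le> c1 * deriv l (u2 $ i)"
        using dm[of "u1 $ i" "u2 $ i"] lt c12 by (simp add: mult_left_mono)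
      also have "\<dots> \<le> c2 * deriv l (u2 $ i)"
        using c12 dn by (simp add: mult_right_mono)
      finally have "c1 * deriv l (u1 $ i) \<le> c2 * deriv l (u2 $ i)" .
      moreover have "u1 $ i + c1 * deriv l (u1 $ i) = x $ i" using e1 by blast
      moreover have "u2 $ i + c2 * deriv l (u2 $ i) = x $ i" using e2 by blast
      ultimately show False using lt by linarith
    qed
    have "Lsum l u2 \<le> Lsum l u1"
      unfolding Lsum_def by (intro sum_mono monoD[OF mono] le)
    thus "Hfun l lam x \<rho>2 \<le> Hfun l lam x \<rho>1"
      unfolding Hfun_def u1_def u2_def by simp
  next
    fix u :: "real^'m" and \<rho> :: real
    assume K: "KKT l lam x u \<rho>"
    let ?c = "\<rho> / real CARD('m)"
    have eq: "\<forall>i. u $ i + ?c * deriv l (u $ i) = x $ i"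
      using K unfolding KKT_def by (auto simp: algebra_simps)
    have r0: "\<rho> \<ge> 0" using K unfolding KKT_def by simp
    have feas: "(1 / real CARD('m)) * Lsum l u \<le> lam" using K unfolding KKT_def by simp
    show rpos: "\<rho> > 0"
    proof (rule ccontr)
      assume "\<not> \<rho> > 0"
      hence "\<rho> = 0" using r0 by simp
      hence "u = x" using eq by (simp add: vec_eq_iff)
      thus False using feas notin unfolding Zset_def by simp
    qed
    have "\<rho> * ((1 / real CARD('m)) * Lsum l u - lam) = 0" using K unfolding KKT_def by simp
    hence act: "Lsum l u = real CARD('m) * lam" using rpos m by (simp add: field_simps)
    have uu: "u_of l x \<rho> = u" by (rule u_of_char(2)[OF dm dn cont r0 eq])
    obtain i0 where gi0: "deriv l (u $ i0) \<noteq> 0"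
    proof (rule ccontr)
      assume "\<not> thesis"
      hence z: "\<And>i. deriv l (u $ i) = 0" using that by blast
      obtain t where t: "l t < lam" using below by blast
      have "l (u $ i) < lam" for i
      proof -
        have "l t - l (u $ i) \<ge> deriv l (u $ i) * (t - u $ i)" by (rule T)
        hence "l (u $ i) \<le> l t" using z[of i] by simp
        thus ?thesis using t by linarith
      qed
      hence "Lsum l u < (\<Sum>i\<in>(UNIV::'m set). lam)" unfolding Lsum_def
        by (intro sum_strict_mono) auto
      thus False using act by simp
    qed
    show "\<forall>h\<in>K_H l x \<rho>. h < 0"
    proof
      fix h assume hK: "h \<in> K_H l x \<rho>"
      obtain \<Lambda> where L: "\<Lambda> \<in> clarke_jac_gradL l u"
        and h0: "h = - (gradL l u \<bullet> (matrix_inv (real CARD('m) *\<^sub>R mat 1 + \<rho> *\<^sub>R \<Lambda>) *v gradL l u))"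
        using hK unfolding K_H_def Let_def uu by blast
      obtain \<eta> where \<eta>: "\<forall>i. \<eta> i \<in> clarke_subdiff (deriv l) (u $ i)"
        and L2: "\<Lambda> = (\<chi> i j. if i = j then \<eta> i else 0)"
        using L unfolding clarke_jac_gradL_def by blast
      have h: "h = - (gradL l u \<bullet> (matrix_inv (real CARD('m) *\<^sub>R mat 1 + \<rho> *\<^sub>R dg \<eta>) *v gradL l u))"
        using h0 L2 unfolding dg_def by simp
      have md: "mono (deriv l)" by (rule monoI) (rule dm)
      have \<eta>0: "\<eta> i \<ge> 0" for i
        using clarke_nonneg[OF md] \<eta> by blast
      define d where "d = (\<lambda>i. real CARD('m) + \<rho> * \<eta> i)"
      have dpos: "d i > 0" for i unfolding d_def using m rpos \<eta>0[of i] by (simp add: add_pos_nonneg)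
      have A: "real CARD('m) *\<^sub>R mat 1 + \<rho> *\<^sub>R dg \<eta> = dg d"
        unfolding dg_def mat_def d_def by (simp add: vec_eq_iff)
      have "gradL l u \<bullet> (matrix_inv (dg d) *v gradL l u) = (\<Sum>i\<in>UNIV. (deriv l (u $ i))^2 / d i)"
        using dpos dg_inv[of d] by (simp add: less_imp_neq[symmetric] dg_mulv inner_vec_def gradL_def power2_eq_square)
      also have "\<dots> > 0"
      proof -
        have p0: "0 < (deriv l (u $ i0))^2 / d i0" using gi0 dpos[of i0] by simp
        have p1: "\<And>i. i \<in> UNIV \<Longrightarrow> 0 \<le> (deriv l (u $ i))^2 / d i"
          using divide_nonneg_pos[OF zero_le_power2 dpos] by blast
        have fin: "finite (UNIV::'m set)" by simp
        show ?thesis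
          by (rule sum_pos2[where I=UNIV and i=i0 and f="\<lambda>i. (deriv l (u $ i))^2 / d i", OF fin UNIV_I p0 p1])
      qed
      finally have pos: "gradL l u \<bullet> (matrix_inv (dg d) *v gradL l u) > 0" .
      have "h = - (gradL l u \<bullet> (matrix_inv (dg d) *v gradL l u))" using h A by simp
      thus "h < 0" using pos by linarith
    qed
  qed
qed

end
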